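(* Let $\mathbf D_0\in\mathbb R^{m\times p}$ have unit-norm columns, $\mathbf W\in\mathcal W_{\mathbf D_0}$, $\mathbf v\in\mathcal S^p$, and write $\mathbf D(t')=\mathbf D(\mathbf W,\mathbf v,t')$. Let $\mathbf x\in\mathbb R^m$, and $\boldsymbol\alpha_0\in\mathbb R^p$ with support $J$, $|J|=k$. Assume $k\mu(t)\le1/2$, $0\le t'\le t$, $\frac94\lambda\le\underline\alpha\le\min_{j\in J}|[\boldsymbol\alpha_0]_j|$ with $\lambda>0$, and $$\|[\mathbf D(t')]_J^\top(\mathbf x-\mathbf D(t')\boldsymbol\alpha_0)\|_\infty<\lambda(2-Q_t^2),\qquad\|[\mathbf D(t')]_{J^c}^\top(\mathbf I-\mathbf P_J(t'))\mathbf x\|_\infty<\lambda(2-Q_t^2).$$ Then the vector $\hat{\boldsymbol\alpha}(t')$ given by $\hat{\boldsymbol\alpha}(t')_J=([\mathbf D(t')]_J^\top[\mathbf D(t')]_J)^{-1}([\mathbf D(t')]_J^\top\mathbf x-\lambda\,\mathrm{sign}([\boldsymbol\alpha_0]_J))$, $\hat{\boldsymbol\alpha}(t')_{J^c}=\mathbf 0$, is the unique solution of $\min_{\boldsymbol\alpha\in\mathbb R^p}\frac12\|\mathbf x-\mathbf D(t')\boldsymbol\alpha\|_2^2+\lambda\|\boldsymbol\alpha\|_1$.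
   Context: $\mu_0=\max_{i\ne j}|[\mathbf d_0^i]^\top\mathbf d_0^j|$, $\mu(t)=\mu_0+3t$, $Q_t=1/\sqrt{1-k\mu(t)}$. $\mathcal S^p$ unit sphere; $\mathcal W_{\mathbf D_0}=\{\mathbf W:\mathrm{diag}(\mathbf W^\top\mathbf D_0)=\mathbf 0,\mathrm{diag}(\mathbf W^\top\mathbf W)=\mathbf 1\}$; $\mathbf D(\mathbf W,\mathbf v,t)=\mathbf D_0\mathrm{Diag}[\cos(\mathbf vt)]+\mathbf W\mathrm{Diag}[\sin(\mathbf vt)]$. $\mathbf M_J$ denotes the columns indexed by $J$; $\mathbf P_J(t')$ is the orthogonal projector onto the span of $[\mathbf D(t')]_J$. *)

theory Defs
  imports "HOL-Analysis.Analysis"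
begin

text \<open>Matrices D :: real^'p^'m are m x p (rows indexed by 'm, columns by 'p).\<close>

definition mutual_coherence :: "real^'p^'m \<Rightarrow> real" where
  "mutual_coherence D0 =
     Max (insert 0 {\<bar>column i D0 \<bullet> column j D0\<bar> | i j. i \<noteq> j})"

definition mu_t :: "real^'p^'m \<Rightarrow> real \<Rightarrow> real" where
  "mu_t D0 t = mutual_coherence D0 + 3 * t"

definition Q_t :: "real^'p^'m \<Rightarrow> nat \<Rightarrow> real \<Rightarrow> real" where
  "Q_t D0 k t = 1 / sqrt (1 - real k * mu_t D0 t)"

definition W_set :: "real^'p^'m \<Rightarrow> (real^'p^'m) set" where
  "W_set D0 = {W. (\<forall>j. column j W \<bullet> column j D0 = 0) \<and> (\<forall>j. column j W \<bullet> column j W = 1)}"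

definition Dpath :: "real^'p^'m \<Rightarrow> real^'p^'m \<Rightarrow> real^'p \<Rightarrow> real \<Rightarrow> real^'p^'m" where
  "Dpath D0 W v t = (\<chi> i j. D0$i$j * cos (v$j * t) + W$i$j * sin (v$j * t))"

definition linf_on :: "'p set \<Rightarrow> ('p \<Rightarrow> real) \<Rightarrow> real" where
  "linf_on A f = Max (insert 0 ((\<lambda>j. \<bar>f j\<bar>) ` A))"

definition l1norm :: "real^'p \<Rightarrow> real" where
  "l1norm a = (\<Sum>j\<in>UNIV. \<bar>a$j\<bar>)"

definition orth_proj :: "('a::real_inner) set \<Rightarrow> 'a \<Rightarrow> 'a" where
  "orth_proj S x = (THE y. y \<in> S \<and> (\<forall>z\<in>S. (x - y) \<bullet> z = 0))"

definition proj_cols :: "real^'p^'m \<Rightarrow> 'p set \<Rightarrow> real^'m \<Rightarrow> real^'m" where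
  "proj_cols D J x = orth_proj (span ((\<lambda>j. column j D) ` J)) x"

text \<open>Gram matrix [D]_J^T [D]_J embedded block-diagonally into a p x p matrix, with the
 identity on the J^c block; its inverse restricted to J is ([D]_J^T [D]_J)^{-1}.\<close>
definition gram_J_ext :: "real^'p^'m \<Rightarrow> 'p set \<Rightarrow> real^'p^'p" where
  "gram_J_ext D J = (\<chi> i j. if i \<in> J \<and> j \<in> J then column i D \<bullet> column j D
                            else if i = j then 1 else 0)"

definition alpha_hat :: "real^'p^'m \<Rightarrow> real^'m \<Rightarrow> real \<Rightarrow> real^'p \<Rightarrow> real^'p" where
  "alpha_hat D x lam alpha0 =
    (let J = {j. alpha0$j \<noteq> 0};
         b = (\<chi> j. if j \<in> J then column j D \<bullet> x - lam * sgn (alpha0$j) else 0);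
         y = matrix_inv (gram_J_ext D J) *v b
     in (\<chi> j. if j \<in> J then y$j else 0))"

definition lasso_obj :: "real^'p^'m \<Rightarrow> real^'m \<Rightarrow> real \<Rightarrow> real^'p \<Rightarrow> real" where
  "lasso_obj D x lam a = 1/2 * (norm (x - D *v a))\<^sup>2 + lam * l1norm a"

end

theory Submission
  imports Defs
begin



lemma dd_exists:
  fixes G :: "'p \<Rightarrow> 'p \<Rightarrow> real" and u :: "'p \<Rightarrow> real"
  assumes fin: "finite J" and ne: "J \<noteq> {}" and diag: "\<forall>i\<in>J. G i i = 1"
    and off: "\<forall>i\<in>J. \<forall>j\<in>J. i \<noteq> j \<longrightarrow> \<bar>G i j\<bar> \<le> mu" and mu: "mu \<ge> 0"
  shows "\<exists>i0\<in>J. (\<forall>i\<in>J. \<bar>u i\<bar> \<le> \<bar>u i0\<bar>) \<and>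
           (1 - real (card J) * mu) * \<bar>u i0\<bar> \<le> \<bar>\<Sum>j\<in>J. G i0 j * u j\<bar>"
proof -
  define m where "m = Max ((\<lambda>i. \<bar>u i\<bar>) ` J)"
  have "m \<in> (\<lambda>i. \<bar>u i\<bar>) ` J" unfolding m_def using fin ne by (intro Max_in) auto
  then obtain i0 where i0: "i0 \<in> J" "\<bar>u i0\<bar> = m" by auto
  have mx: "\<forall>i\<in>J. \<bar>u i\<bar> \<le> \<bar>u i0\<bar>" using i0 fin unfolding m_def by auto
  have split: "(\<Sum>j\<in>J. G i0 j * u j) = u i0 + (\<Sum>j\<in>J-{i0}. G i0 j * u j)"
    using sum.remove[OF fin i0(1), of "\<lambda>j. G i0 j * u j"] diag i0 by simp
  have "\<bar>\<Sum>j\<in>J-{i0}. G i0 j * u j\<bar> \<le> (\<Sum>j\<in>J-{i0}. \<bar>G i0 j * u j\<bar>)" by (rule sum_abs)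
  also have "\<dots> \<le> (\<Sum>j\<in>J-{i0}. mu * \<bar>u i0\<bar>)"
  proof (rule sum_mono)
    fix j assume j: "j \<in> J - {i0}"
    have "\<bar>G i0 j\<bar> \<le> mu" using off i0 j by auto
    moreover have "\<bar>u j\<bar> \<le> \<bar>u i0\<bar>" using mx j by auto
    ultimately show "\<bar>G i0 j * u j\<bar> \<le> mu * \<bar>u i0\<bar>"
      by (simp add: abs_mult mult_mono' mu)
  qed
  also have "\<dots> = real (card J - 1) * mu * \<bar>u i0\<bar>" using fin i0 by simp
  also have "\<dots> \<le> real (card J) * mu * \<bar>u i0\<bar>"
    by (intro mult_right_mono) (auto simp: mu)
  finally have b: "\<bar>\<Sum>j\<in>J-{i0}. G i0 j * u j\<bar> \<le> real (card J) * mu * \<bar>u i0\<bar>" .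
  have "(1 - real (card J) * mu) * \<bar>u i0\<bar> \<le> \<bar>\<Sum>j\<in>J. G i0 j * u j\<bar>"
    unfolding split using b by (simp add: algebra_simps)
  thus ?thesis using i0 mx by blast
qed

lemma dd_le:
  fixes G :: "'p \<Rightarrow> 'p \<Rightarrow> real" and u :: "'p \<Rightarrow> real"
  assumes fin: "finite J" and diag: "\<forall>i\<in>J. G i i = 1"
    and off: "\<forall>i\<in>J. \<forall>j\<in>J. i \<noteq> j \<longrightarrow> \<bar>G i j\<bar> \<le> mu" and mu: "mu \<ge> 0"
    and pos: "real (card J) * mu < 1"
    and B: "\<forall>i\<in>J. \<bar>\<Sum>j\<in>J. G i j * u j\<bar> \<le> B" and i: "i \<in> J"
  shows "(1 - real (card J) * mu) * \<bar>u i\<bar> \<le> B"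
proof -
  have ne: "J \<noteq> {}" using i by auto
  obtain i0 where i0: "i0 \<in> J" "\<forall>i\<in>J. \<bar>u i\<bar> \<le> \<bar>u i0\<bar>"
     "(1 - real (card J) * mu) * \<bar>u i0\<bar> \<le> \<bar>\<Sum>j\<in>J. G i0 j * u j\<bar>"
    using dd_exists[OF fin ne diag off mu, of u] by blast
  have "(1 - real (card J) * mu) * \<bar>u i\<bar> \<le> (1 - real (card J) * mu) * \<bar>u i0\<bar>"
    using i0 i pos by (intro mult_left_mono) auto
  also have "\<dots> \<le> B" using i0 B by force
  finally show ?thesis .
qed

lemma dd_less:
  fixes G :: "'p \<Rightarrow> 'p \<Rightarrow> real" and u :: "'p \<Rightarrow> real"
  assumes fin: "finite J" and diag: "\<forall>i\<in>J. G i i = 1"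
    and off: "\<forall>i\<in>J. \<forall>j\<in>J. i \<noteq> j \<longrightarrow> \<bar>G i j\<bar> \<le> mu" and mu: "mu \<ge> 0"
    and pos: "real (card J) * mu < 1"
    and B: "\<forall>i\<in>J. \<bar>\<Sum>j\<in>J. G i j * u j\<bar> < B" and i: "i \<in> J"
  shows "(1 - real (card J) * mu) * \<bar>u i\<bar> < B"
proof -
  have ne: "J \<noteq> {}" using i by auto
  obtain i0 where i0: "i0 \<in> J" "\<forall>i\<in>J. \<bar>u i\<bar> \<le> \<bar>u i0\<bar>"
     "(1 - real (card J) * mu) * \<bar>u i0\<bar> \<le> \<bar>\<Sum>j\<in>J. G i0 j * u j\<bar>"
    using dd_exists[OF fin ne diag off mu, of u] by blast
  have "(1 - real (card J) * mu) * \<bar>u i\<bar> \<le> (1 - real (card J) * mu) * \<bar>u i0\<bar>"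
    using i0 i pos by (intro mult_left_mono) auto
  also have "\<dots> < B" using i0 B by force
  finally show ?thesis .
qed

lemma span_repr:
  fixes d :: "'p \<Rightarrow> 'a::real_vector"
  assumes "y \<in> span (d ` J)" and fin: "finite J"
  shows "\<exists>c. y = (\<Sum>j\<in>J. c j *\<^sub>R d j)"
  using assms
proof (induction rule: span_induct_alt)
  case base
  show ?case by (intro exI[of _ "\<lambda>_. 0"]) simp
next
  case (step c x y)
  then obtain j0 where j0: "j0 \<in> J" "x = d j0" by auto
  from step obtain e where e: "y = (\<Sum>j\<in>J. e j *\<^sub>R d j)" by auto
  show ?case
  proof (intro exI[of _ "\<lambda>j. e j + (if j = j0 then c else 0)"])
    have "(\<Sum>j\<in>J. (e j + (if j = j0 then c else 0)) *\<^sub>R d j)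
        = (\<Sum>j\<in>J. e j *\<^sub>R d j) + (\<Sum>j\<in>J. (if j = j0 then c else 0) *\<^sub>R d j)"
      by (simp add: scaleR_add_left sum.distrib)
    also have "(\<Sum>j\<in>J. (if j = j0 then c else 0) *\<^sub>R d j) = (\<Sum>j\<in>J. (if j = j0 then c *\<^sub>R d j else 0))"
      by (rule sum.cong) auto
    also have "\<dots> = c *\<^sub>R d j0"
      using j0 fin by (simp add: sum.delta')
    finally show "c *\<^sub>R x + y = (\<Sum>j\<in>J. (e j + (if j = j0 then c else 0)) *\<^sub>R d j)"
      using e j0 by simp
  qed
qed



lemma col_Dpath:
  "column j (Dpath D0 W v t) = cos (v$j*t) *\<^sub>R column j D0 + sin (v$j*t) *\<^sub>R column j W"
  by (simp add: vec_eq_iff column_def Dpath_def mult.commute)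

lemma coh_fin: "finite {\<bar>column i D0 \<bullet> column j D0\<bar> | i j. i \<noteq> j}"
proof -
  have "{\<bar>column i D0 \<bullet> column j D0\<bar> | i j. i \<noteq> j} \<subseteq>
          (\<lambda>(i,j). \<bar>column i D0 \<bullet> column j D0\<bar>) ` UNIV" by auto
  thus ?thesis by (rule finite_subset) simp
qed

lemma coh_le:
  fixes D0 :: "real^'p^'m"
  shows "i \<noteq> j \<Longrightarrow> \<bar>column i D0 \<bullet> column j D0\<bar> \<le> mutual_coherence D0"
  unfolding mutual_coherence_def using coh_fin[of D0] by (intro Max_ge) auto

lemma coh_nonneg: "mutual_coherence (D0::real^'p^'m) \<ge> 0"
  unfolding mutual_coherence_def using coh_fin[of D0] by (intro Max_ge) auto

lemma Dpath_unit:
  fixes D0 W :: "real^'p^'m"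
  assumes unit_cols: "\<forall>j. norm (column j D0) = 1" and W: "W \<in> W_set D0"
  shows "column j (Dpath D0 W v t) \<bullet> column j (Dpath D0 W v t) = 1"
proof -
  have a: "column j D0 \<bullet> column j D0 = 1" using unit_cols by (simp add: norm_eq_sqrt_inner)
  have b: "column j W \<bullet> column j D0 = 0" "column j W \<bullet> column j W = 1" using W by (auto simp: W_set_def)
  have b': "column j D0 \<bullet> column j W = 0" using b by (simp add: inner_commute)
  show ?thesis unfolding col_Dpath
    by (simp add: inner_add_left inner_add_right a b b' algebra_simps flip: power2_eq_square)
qed

lemma Dpath_coh:
  fixes D0 W :: "real^'p^'m"
  assumes unit_cols: "\<forall>j. norm (column j D0) = 1" and W: "W \<in> W_set D0"
    and v: "norm v = 1" and t': "0 \<le> t'" "t' \<le> t" and t1: "t \<le> 1" and ij: "i \<noteq> j"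
  shows "\<bar>column i (Dpath D0 W v t') \<bullet> column j (Dpath D0 W v t')\<bar> \<le> mu_t D0 t"
proof -
  define csI where "csI = cos (v$i*t')"
  define csJ where "csJ = cos (v$j*t')"
  define znI where "znI = sin (v$i*t')"
  define znJ where "znJ = sin (v$j*t')"
  have nW: "norm (column l W) = 1" for l
    using W by (auto simp: W_set_def norm_eq_sqrt_inner)
  have sbd: "\<bar>sin (v$l*t')\<bar> \<le> t" for l
  proof -
    have "\<bar>sin (v$l*t')\<bar> \<le> \<bar>v$l*t'\<bar>" by (rule abs_sin_x_le_abs_x)
    also have "\<dots> = \<bar>v$l\<bar> * t'" using t' by (simp add: abs_mult)
    also have "\<dots> \<le> 1 * t'" using component_le_norm_cart[of v l] v t' by (intro mult_right_mono) auto
    finally show ?thesis using t' by simp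
  qed
  have znI: "\<bar>znI\<bar> \<le> t" and znJ: "\<bar>znJ\<bar> \<le> t" unfolding znI_def znJ_def by (rule sbd)+
  have csI: "\<bar>csI\<bar> \<le> 1" and csJ: "\<bar>csJ\<bar> \<le> 1" unfolding csI_def csJ_def by auto
  define A where "A = column i D0 \<bullet> column j D0"
  define B where "B = column i D0 \<bullet> column j W"
  define C where "C = column i W \<bullet> column j D0"
  define E where "E = column i W \<bullet> column j W"
  have A: "\<bar>A\<bar> \<le> mutual_coherence D0" unfolding A_def using coh_le ij by blast
  have B: "\<bar>B\<bar> \<le> 1" unfolding B_def using Cauchy_Schwarz_ineq2[of "column i D0" "column j W"] unit_cols nW by simp
  have C: "\<bar>C\<bar> \<le> 1" unfolding C_def using Cauchy_Schwarz_ineq2[of "column i W" "column j D0"] unit_cols nW by simp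
  have E: "\<bar>E\<bar> \<le> 1" unfolding E_def using Cauchy_Schwarz_ineq2[of "column i W" "column j W"] nW by simp
  have eq: "column i (Dpath D0 W v t') \<bullet> column j (Dpath D0 W v t') = csI*csJ*A + csI*znJ*B + znI*csJ*C + znI*znJ*E"
    unfolding col_Dpath csI_def csJ_def znI_def znJ_def A_def B_def C_def E_def
    by (simp add: inner_add_left inner_add_right algebra_simps)
  have "\<bar>csI*csJ*A\<bar> \<le> mutual_coherence D0"
  proof -
    have "\<bar>csI*csJ\<bar> \<le> 1" using csI csJ by (simp add: abs_mult mult_le_one)
    hence "\<bar>csI*csJ*A\<bar> \<le> 1 * \<bar>A\<bar>" unfolding abs_mult[of "csI*csJ"] by (intro mult_right_mono) auto
    thus ?thesis using A by simp
  qed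
  moreover have "\<bar>csI*znJ*B\<bar> \<le> t"
  proof -
    have "\<bar>csI*znJ*B\<bar> = \<bar>csI\<bar> * (\<bar>znJ\<bar> * \<bar>B\<bar>)" by (simp add: abs_mult)
    also have "\<dots> \<le> 1 * (t * 1)" using csI znJ B by (intro mult_mono) auto
    finally show ?thesis by simp
  qed
  moreover have "\<bar>znI*csJ*C\<bar> \<le> t"
  proof -
    have "\<bar>znI*csJ*C\<bar> = \<bar>znI\<bar> * (\<bar>csJ\<bar> * \<bar>C\<bar>)" by (simp add: abs_mult)
    also have "\<dots> \<le> t * (1 * 1)" using csJ znI C t' by (intro mult_mono) auto
    finally show ?thesis by simp
  qed
  moreover have "\<bar>znI*znJ*E\<bar> \<le> t"
  proof -
    have "\<bar>znI*znJ*E\<bar> = \<bar>znI\<bar> * (\<bar>znJ\<bar> * \<bar>E\<bar>)" by (simp add: abs_mult)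
    also have "\<dots> \<le> 1 * (t * 1)" using znI znJ E t1 t' by (intro mult_mono) auto
    finally show ?thesis by simp
  qed
  ultimately show ?thesis unfolding eq mu_t_def by linarith
qed

lemma orth_proj_props:
  fixes S :: "'a::euclidean_space set"
  assumes S: "subspace S"
  shows "orth_proj S x \<in> S \<and> (\<forall>z\<in>S. (x - orth_proj S x) \<bullet> z = 0)"
proof -
  obtain y z where yz: "y \<in> span S" "\<And>w. w \<in> span S \<Longrightarrow> orthogonal z w" "x = y + z"
    using orthogonal_subspace_decomp_exists by blast
  have spS: "span S = S" using S by (rule span_eq_iff[THEN iffD2])
  have ex: "y \<in> S \<and> (\<forall>w\<in>S. (x - y) \<bullet> w = 0)" using yz spS by (auto simp: orthogonal_def)
  have uniq: "y1 = y2" if 1: "y1 \<in> S \<and> (\<forall>w\<in>S. (x - y1) \<bullet> w = 0)"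
      and 2: "y2 \<in> S \<and> (\<forall>w\<in>S. (x - y2) \<bullet> w = 0)" for y1 y2
  proof -
    have d: "y1 - y2 \<in> S" using 1 2 S by (simp add: subspace_diff)
    have "(y1 - y2) \<bullet> (y1 - y2) = (x - y2) \<bullet> (y1 - y2) - (x - y1) \<bullet> (y1 - y2)"
      by (simp add: inner_diff_left)
    also have "\<dots> = 0" using 1 2 d by simp
    finally show ?thesis by simp
  qed
  have "\<exists>!y. y \<in> S \<and> (\<forall>w\<in>S. (x - y) \<bullet> w = 0)" using ex uniq by blast
  thus ?thesis unfolding orth_proj_def by (rule theI')
qed

lemma inv_apply:
  fixes A :: "real^'n^'n"
  assumes ker: "\<forall>u. A *v u = 0 \<longrightarrow> u = 0"
  shows "A *v (matrix_inv A *v b) = b"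
proof -
  have "invertible A" using ker invertible_left_inverse matrix_left_invertible_ker by blast
  hence "\<exists>A'. A ** A' = mat 1 \<and> A' ** A = mat 1" by (simp add: invertible_def)
  hence "A ** matrix_inv A = mat 1 \<and> matrix_inv A ** A = mat 1"
    unfolding matrix_inv_def by (rule someI_ex)
  thus ?thesis by (simp add: matrix_vector_mul_assoc)
qed



lemma Mv_sum: "(D::real^'p^'m) *v c = (\<Sum>j\<in>UNIV. c$j *\<^sub>R column j D)"
  by (simp add: matrix_mult_sum scalar_mult_eq_scaleR)

lemma Mv_sumJ:
  assumes "\<forall>j. j \<notin> J \<longrightarrow> c$j = 0"
  shows "(D::real^'p^'m) *v c = (\<Sum>j\<in>J. c$j *\<^sub>R column j D)"
  unfolding Mv_sum using assms by (intro sum.mono_neutral_right) auto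

lemma linf_ge: "finite A \<Longrightarrow> i \<in> A \<Longrightarrow> \<bar>f i\<bar> \<le> linf_on A f"
  unfolding linf_on_def by (intro Max_ge) auto

lemma Mrow:
  fixes D :: "real^'p^'m"
  shows "(gram_J_ext D J *v u)$i =
     (if i \<in> J then (\<Sum>j\<in>J. (column i D \<bullet> column j D) * u$j) else u$i)"
proof (cases "i \<in> J")
  case True
  have "(gram_J_ext D J *v u)$i = (\<Sum>j\<in>UNIV. (if j \<in> J then (column i D \<bullet> column j D) * u$j else 0))"
    unfolding matrix_vector_mult_def gram_J_ext_def using True by (auto intro!: sum.cong)
  also have "\<dots> = (\<Sum>j\<in>J. (column i D \<bullet> column j D) * u$j)"
    by (simp add: sum.If_cases)
  finally show ?thesis using True by simp
next
  case False
  have eq: "\<And>j. (if i = j then 1 else 0) * u$j = (if i = j then u$j else (0::real))" by simp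
  show ?thesis
    unfolding matrix_vector_mult_def gram_J_ext_def using False by (simp add: eq)
qed



theorem corollary3:
  fixes D0 W :: "real^'p^'m" and v :: "real^'p" and x :: "real^'m"
    and alpha0 :: "real^'p" and J :: "'p set" and k :: nat
    and t t' lam alpha_min :: real
  assumes unit_cols: "\<forall>j. norm (column j D0) = 1"
    and W: "W \<in> W_set D0"
    and v: "norm v = 1"
    and supp: "J = {j. alpha0$j \<noteq> 0}"
    and k: "card J = k"
    and coh: "real k * mu_t D0 t \<le> 1/2"
    and t': "0 \<le> t'" "t' \<le> t"
    and lam: "lam > 0"
    and amin1: "9/4 * lam \<le> alpha_min"
    and amin2: "\<forall>j\<in>J. alpha_min \<le> \<bar>alpha0$j\<bar>"
    and c1: "linf_on J (\<lambda>j. column j (Dpath D0 W v t') \<bullet> (x - Dpath D0 W v t' *v alpha0))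
               < lam * (2 - (Q_t D0 k t)\<^sup>2)"
    and c2: "linf_on (- J) (\<lambda>j. column j (Dpath D0 W v t') \<bullet>
                 (x - proj_cols (Dpath D0 W v t') J x))
               < lam * (2 - (Q_t D0 k t)\<^sup>2)"
  shows "{a. \<forall>b. lasso_obj (Dpath D0 W v t') x lam a \<le> lasso_obj (Dpath D0 W v t') x lam b}
           = {alpha_hat (Dpath D0 W v t') x lam alpha0}"
proof -
  define D where "D = Dpath D0 W v t'"
  define d where "d = (\<lambda>j. column j D)"
  define mu where "mu = mu_t D0 t"
  define q where "q = (Q_t D0 k t)\<^sup>2"
  define a where "a = alpha_hat D x lam alpha0"
  define s where "s = (\<lambda>j. sgn (alpha0$j))"
  define G where "G = (\<lambda>i j. d i \<bullet> d j)"
  have fin: "finite J" by simp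
  have fin': "finite (-J)" by simp
  have t0: "t \<ge> 0" using t' by simp
  have mu0: "mu \<ge> 0" unfolding mu_def mu_t_def using coh_nonneg[of D0] t0 by simp
  have kmu: "real (card J) * mu \<le> 1/2" using coh k unfolding mu_def by simp
  have kmu1: "real (card J) * mu < 1" using kmu by simp
  have qeq: "q = 1 / (1 - real (card J) * mu)"
    using kmu k unfolding q_def Q_t_def mu_def by (simp add: power_divide)
  have q1: "q * (1 - real (card J) * mu) = 1" using qeq kmu1 by simp
  have qge: "q \<ge> 1" using qeq kmu mu0
    by (simp add: le_divide_eq)
  have qpos: "q > 0" using qge by simp
  have kmuq: "real (card J) * mu * q = q - 1" using q1 by (simp add: algebra_simps)
  have unit: "\<And>j. G j j = 1" unfolding G_def d_def D_def using Dpath_unit[OF unit_cols W] by blast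
  have cohJ: "\<And>i j. i \<in> J \<Longrightarrow> i \<noteq> j \<Longrightarrow> \<bar>G i j\<bar> \<le> mu"
  proof -
    fix i j assume i: "i \<in> J" and ij: "i \<noteq> j"
    have "card J \<ge> 1" using i fin by (metis One_nat_def Suc_leI card_gt_0_iff empty_iff)
    hence "mu \<le> real (card J) * mu" using mu0 by (simp add: mult_le_cancel_right1)
    hence "mu \<le> 1/2" using kmu by simp
    hence t1: "t \<le> 1" unfolding mu_def mu_t_def using coh_nonneg[of D0] by simp
    show "\<bar>G i j\<bar> \<le> mu" unfolding G_def d_def D_def mu_def
      by (rule Dpath_coh[OF unit_cols W v t' t1 ij])
  qed
  have diag: "\<forall>i\<in>J. G i i = 1" using unit by simp
  have off: "\<forall>i\<in>J. \<forall>j\<in>J. i \<noteq> j \<longrightarrow> \<bar>G i j\<bar> \<le> mu" using cohJ by blast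
  note DD_le = dd_le[OF fin diag off mu0 kmu1]
  note DD_less = dd_less[OF fin diag off mu0 kmu1]
  have innsum: "d i \<bullet> (\<Sum>j\<in>J. c j *\<^sub>R d j) = (\<Sum>j\<in>J. G i j * c j)" for i c
    unfolding G_def by (simp add: inner_sum_right mult.commute)
  have MvJ: "D *v c = (\<Sum>j\<in>J. c$j *\<^sub>R d j)" if "\<forall>j. j \<notin> J \<longrightarrow> c$j = 0" for c
    unfolding d_def using Mv_sumJ[OF that] .
  define M where "M = gram_J_ext D J"
  define bv where "bv = (\<chi> j. if j \<in> J then d j \<bullet> x - lam * s j else 0)"
  define y where "y = matrix_inv M *v bv"
  have ker: "\<forall>u. M *v u = 0 \<longrightarrow> u = 0"
  proof (intro allI impI)
    fix u assume u: "M *v u = 0"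
    have "u$i = 0" for i
    proof (cases "i \<in> J")
      case True
      have "\<forall>i\<in>J. \<bar>\<Sum>j\<in>J. G i j * u$j\<bar> \<le> 0"
      proof
        fix i' assume i': "i' \<in> J"
        have "(M *v u)$i' = 0" using u by simp
        thus "\<bar>\<Sum>j\<in>J. G i' j * u$j\<bar> \<le> 0" unfolding M_def Mrow G_def d_def using i' by simp
      qed
      from DD_le[OF this True] have "(1 - real (card J) * mu) * \<bar>u$i\<bar> \<le> 0" .
      thus ?thesis using kmu1 by (simp add: mult_le_0_iff)
    next
      case False
      then show ?thesis using u unfolding M_def by (auto simp: vec_eq_iff Mrow dest: spec[of _ i])
    qed
    thus "u = 0" by (simp add: vec_eq_iff)
  qed
  have My: "M *v y = bv" unfolding y_def by (rule inv_apply[OF ker])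
  have y0: "y$j = 0" if "j \<notin> J" for j
    using arg_cong[OF My, of "\<lambda>z. z$j"] that unfolding M_def bv_def by (simp add: Mrow)
  have ysys: "(\<Sum>j\<in>J. G i j * y$j) = d i \<bullet> x - lam * s i" if "i \<in> J" for i
    using arg_cong[OF My, of "\<lambda>z. z$i"] that unfolding M_def bv_def G_def d_def by (simp add: Mrow)
  have aeqy: "a = y"
  proof -
    have "a = (\<chi> j. if j \<in> J then y$j else 0)"
      unfolding a_def alpha_hat_def Let_def y_def M_def bv_def s_def d_def supp[symmetric] by simp
    thus ?thesis using y0 by (simp add: vec_eq_iff)
  qed
  have a0: "\<forall>j. j \<notin> J \<longrightarrow> a$j = 0" using y0 aeqy by simp
  have asys: "(\<Sum>j\<in>J. G i j * a$j) = d i \<bullet> x - lam * s i" if "i \<in> J" for i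
    using ysys[OF that] aeqy by simp
  have Da: "D *v a = (\<Sum>j\<in>J. a$j *\<^sub>R d j)" by (rule MvJ[OF a0])
  have F8: "d i \<bullet> (x - D *v a) = lam * s i" if "i \<in> J" for i
    unfolding Da inner_diff_right innsum using asys[OF that] by simp
  have al0: "\<forall>j. j \<notin> J \<longrightarrow> alpha0$j = 0" using supp by auto
  have Dal: "D *v alpha0 = (\<Sum>j\<in>J. alpha0$j *\<^sub>R d j)" by (rule MvJ[OF al0])
  have sabs: "\<bar>s i\<bar> \<le> 1" for i unfolding s_def by (simp add: abs_sgn_eq)
  have c1': "\<forall>i\<in>J. \<bar>d i \<bullet> (x - D *v alpha0)\<bar> < lam * (2 - q)"
    using c1 linf_ge[OF fin, of _ "\<lambda>j. d j \<bullet> (x - D *v alpha0)"] unfolding d_def D_def q_def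
    by (meson order_le_less_trans)
  have usys: "\<forall>i\<in>J. \<bar>\<Sum>j\<in>J. G i j * (a$j - alpha0$j)\<bar> < lam * (3 - q)"
  proof
    fix i assume i: "i \<in> J"
    have "(\<Sum>j\<in>J. G i j * (a$j - alpha0$j)) = (\<Sum>j\<in>J. G i j * a$j) - (\<Sum>j\<in>J. G i j * alpha0$j)"
      by (simp add: right_diff_distrib sum_subtractf)
    also have "\<dots> = d i \<bullet> (x - D *v alpha0) - lam * s i"
      unfolding asys[OF i] Dal inner_diff_right innsum by simp
    finally have e: "(\<Sum>j\<in>J. G i j * (a$j - alpha0$j)) = d i \<bullet> (x - D *v alpha0) - lam * s i" .
    have "\<bar>lam * s i\<bar> \<le> lam" using sabs[of i] lam by (simp add: abs_mult mult_le_cancel_left1)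
    thus "\<bar>\<Sum>j\<in>J. G i j * (a$j - alpha0$j)\<bar> < lam * (3 - q)"
    proof -
      have h: "\<bar>d i \<bullet> (x - D *v alpha0)\<bar> < lam * (2 - q)" using c1' i by blast
      have "\<bar>d i \<bullet> (x - D *v alpha0) - lam * s i\<bar> \<le> \<bar>d i \<bullet> (x - D *v alpha0)\<bar> + \<bar>lam * s i\<bar>"
        by (rule abs_triangle_ineq4)
      moreover have "lam * (3 - q) = lam * (2 - q) + lam" by (simp add: algebra_simps)
      ultimately show ?thesis unfolding e using h \<open>\<bar>lam * s i\<bar> \<le> lam\<close> by linarith
    qed
  qed
  have close: "\<bar>a$i - alpha0$i\<bar> < 9/4 * lam" if i: "i \<in> J" for i
  proof -
    have "(1 - real (card J) * mu) * \<bar>a$i - alpha0$i\<bar> < lam * (3 - q)"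
      using DD_less[OF usys i] .
    hence "q * ((1 - real (card J) * mu) * \<bar>a$i - alpha0$i\<bar>) < q * (lam * (3 - q))"
      using qpos by simp
    moreover have "q * ((1 - real (card J) * mu) * \<bar>a$i - alpha0$i\<bar>) = \<bar>a$i - alpha0$i\<bar>"
      by (metis mult.assoc q1 mult_1)
    ultimately have "\<bar>a$i - alpha0$i\<bar> < lam * (q * (3 - q))" by (simp add: algebra_simps)
    also have "\<dots> \<le> lam * (9/4)"
    proof -
      have "q * (3 - q) \<le> 9/4" using sum_squares_ge_zero[of "q - 3/2" 0]
        by (simp add: algebra_simps power2_eq_square)
      thus ?thesis using lam by (intro mult_left_mono) auto
    qed
    finally show ?thesis by simp
  qed
  have sa: "s i * a$i = \<bar>a$i\<bar>" if i: "i \<in> J" for i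
  proof -
    have "\<bar>a$i - alpha0$i\<bar> < \<bar>alpha0$i\<bar>" using close[OF i] amin1 amin2 i by force
    thus ?thesis unfolding s_def
      by (cases "alpha0$i > 0") (auto simp: abs_if sgn_if split: if_splits)
  qed
  \<comment> \<open>strict dual feasibility\<close>
  define P where "P = proj_cols D J x"
  have Pprops: "P \<in> span (d ` J) \<and> (\<forall>z\<in>span (d ` J). (x - P) \<bullet> z = 0)"
    unfolding P_def proj_cols_def d_def by (rule orth_proj_props) (rule subspace_span)
  obtain w where w: "P = (\<Sum>j\<in>J. w j *\<^sub>R d j)" using span_repr[OF _ fin] Pprops by blast
  define c where "c = (\<lambda>j. w j - a$j)"
  have zeq: "P - D *v a = (\<Sum>j\<in>J. c j *\<^sub>R d j)"
    unfolding w Da c_def by (simp add: scaleR_diff_left sum_subtractf)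
  have csys: "\<forall>i\<in>J. \<bar>\<Sum>j\<in>J. G i j * c j\<bar> \<le> lam"
  proof
    fix i assume i: "i \<in> J"
    have "d i \<in> span (d ` J)" using i by (intro span_base) auto
    hence "(x - P) \<bullet> d i = 0" using Pprops by blast
    hence "d i \<bullet> (x - P) = 0" by (simp add: inner_commute)
    hence dP: "d i \<bullet> P = d i \<bullet> x" by (simp add: inner_diff_right)
    have "(\<Sum>j\<in>J. G i j * c j) = d i \<bullet> (P - D *v a)" unfolding zeq innsum ..
    also have "\<dots> = lam * s i" unfolding inner_diff_right dP Da innsum asys[OF i] by simp
    finally show "\<bar>\<Sum>j\<in>J. G i j * c j\<bar> \<le> lam" using sabs[of i] lam
      by (simp add: abs_mult mult_le_cancel_left1)
  qed
  have cb: "\<bar>c i\<bar> \<le> lam * q" if i: "i \<in> J" for i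
  proof -
    have "(1 - real (card J) * mu) * \<bar>c i\<bar> \<le> lam" using DD_le[OF csys i] .
    hence "q * ((1 - real (card J) * mu) * \<bar>c i\<bar>) \<le> q * lam" using qpos by simp
    moreover have "q * ((1 - real (card J) * mu) * \<bar>c i\<bar>) = \<bar>c i\<bar>"
      by (metis mult.assoc q1 mult_1)
    ultimately show ?thesis by (simp add: algebra_simps)
  qed
  have c2': "\<forall>j\<in>-J. \<bar>d j \<bullet> (x - P)\<bar> < lam * (2 - q)"
    using c2 linf_ge[OF fin', of _ "\<lambda>j. d j \<bullet> (x - P)"] unfolding d_def D_def q_def P_def
    by (meson order_le_less_trans)
  have F7: "\<bar>d j \<bullet> (x - D *v a)\<bar> < lam" if j: "j \<notin> J" for j
  proof -
    have "\<bar>d j \<bullet> (P - D *v a)\<bar> = \<bar>\<Sum>i\<in>J. G j i * c i\<bar>" unfolding zeq innsum ..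
    also have "\<dots> \<le> (\<Sum>i\<in>J. \<bar>G j i * c i\<bar>)" by (rule sum_abs)
    also have "\<dots> \<le> (\<Sum>i\<in>J. mu * (lam * q))"
    proof (rule sum_mono)
      fix i assume i: "i \<in> J"
      have "\<bar>G j i\<bar> \<le> mu" using cohJ[OF i, of j] i j unfolding G_def
        by (auto simp: inner_commute)
      thus "\<bar>G j i * c i\<bar> \<le> mu * (lam * q)" using cb[OF i]
        by (simp add: abs_mult mult_mono' mu0)
    qed
    also have "\<dots> = lam * (real (card J) * mu * q)" by (simp add: algebra_simps)
    also have "\<dots> = lam * (q - 1)" unfolding kmuq ..
    finally have z: "\<bar>d j \<bullet> (P - D *v a)\<bar> \<le> lam * (q - 1)" .
    have "d j \<bullet> (x - D *v a) = d j \<bullet> (x - P) + d j \<bullet> (P - D *v a)"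
      by (simp add: inner_diff_right)
    moreover have "\<bar>d j \<bullet> (x - P)\<bar> < lam * (2 - q)" using c2' j by simp
    moreover have "\<bar>d j \<bullet> (x - P) + d j \<bullet> (P - D *v a)\<bar> \<le> \<bar>d j \<bullet> (x - P)\<bar> + \<bar>d j \<bullet> (P - D *v a)\<bar>"
      by (rule abs_triangle_ineq)
    moreover have "lam * (2 - q) + lam * (q - 1) = lam" by (simp add: algebra_simps)
    ultimately show ?thesis using z by linarith
  qed
  define f where "f = lasso_obj D x lam"
  define r where "r = x - D *v a"
  have key: "f a < f b" if ba: "b \<noteq> a" for b
  proof -
    define h where "h = b - a"
    have Db: "x - D *v b = r - D *v h" unfolding r_def h_def
      by (simp add: matrix_vector_mult_diff_distrib)
    have Dh: "D *v h = (\<Sum>j\<in>UNIV. h$j *\<^sub>R d j)" unfolding d_def by (rule Mv_sum)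
    have rDh: "r \<bullet> (D *v h) = (\<Sum>j\<in>UNIV. h$j * (d j \<bullet> r))"
      unfolding Dh by (simp add: inner_sum_right inner_commute)
    have nsq: "(norm (r - D *v h))\<^sup>2 = (norm r)\<^sup>2 - 2 * (r \<bullet> (D *v h)) + (norm (D *v h))\<^sup>2"
      by (simp add: power2_norm_eq_inner inner_diff_left inner_diff_right inner_commute)
    define T where "T = (\<lambda>j. lam * (\<bar>b$j\<bar> - \<bar>a$j\<bar>) - h$j * (d j \<bullet> r))"
    have sT: "(\<Sum>j\<in>UNIV. T j) = lam * (l1norm b - l1norm a) - r \<bullet> (D *v h)"
      unfolding T_def rDh l1norm_def by (simp add: sum_subtractf sum_distrib_left right_diff_distrib)
    have fdiff: "f b - f a = 1/2 * (norm (D *v h))\<^sup>2 + (\<Sum>j\<in>UNIV. T j)"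
      unfolding f_def lasso_obj_def Db nsq sT r_def[symmetric] by (simp add: algebra_simps)
    have Tnn: "T j \<ge> 0" for j
    proof (cases "j \<in> J")
      case True
      have dr: "d j \<bullet> r = lam * s j" unfolding r_def using F8[OF True] .
      have "s j * b$j \<le> \<bar>s j * b$j\<bar>" by simp
      also have "\<dots> \<le> 1 * \<bar>b$j\<bar>" unfolding abs_mult using sabs[of j] by (intro mult_right_mono) auto
      finally have "s j * b$j \<le> \<bar>b$j\<bar>" by simp
      moreover have "s j * b$j = \<bar>a$j\<bar> + s j * h$j" using sa[OF True] unfolding h_def
        by (simp add: algebra_simps)
      ultimately have "\<bar>b$j\<bar> - \<bar>a$j\<bar> - h$j * s j \<ge> 0" by (simp add: algebra_simps)
      hence "lam * (\<bar>b$j\<bar> - \<bar>a$j\<bar> - h$j * s j) \<ge> 0" using lam by simp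
      thus ?thesis unfolding T_def dr by (simp add: algebra_simps)
    next
      case False
      have hb: "b$j = h$j" "a$j = 0" using a0 False unfolding h_def by auto
      have "h$j * (d j \<bullet> r) \<le> \<bar>h$j\<bar> * \<bar>d j \<bullet> r\<bar>" by (metis abs_ge_self abs_mult)
      also have "\<dots> \<le> \<bar>h$j\<bar> * lam" using F7[OF False] unfolding r_def
        by (intro mult_left_mono) auto
      finally show ?thesis unfolding T_def hb by (simp add: algebra_simps)
    qed
    have Tpos: "T j > 0" if j: "j \<notin> J" and hj: "h$j \<noteq> 0" for j
    proof -
      have hb: "b$j = h$j" "a$j = 0" using a0 j unfolding h_def by auto
      have "h$j * (d j \<bullet> r) \<le> \<bar>h$j\<bar> * \<bar>d j \<bullet> r\<bar>" by (metis abs_ge_self abs_mult)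
      also have "\<dots> < \<bar>h$j\<bar> * lam" using F7[OF j] hj unfolding r_def
        by (intro mult_strict_left_mono) auto
      finally show ?thesis unfolding T_def hb by (simp add: algebra_simps)
    qed
    show "f a < f b"
    proof (cases "\<exists>j. j \<notin> J \<and> h$j \<noteq> 0")
      case True
      then obtain j where j: "j \<notin> J" "h$j \<noteq> 0" by blast
      have "(\<Sum>j\<in>UNIV. T j) > 0" using Tnn Tpos[OF j] by (intro sum_pos2[of UNIV j]) auto
      moreover have "(norm (D *v h))\<^sup>2 \<ge> 0" by simp
      ultimately show ?thesis using fdiff by linarith
    next
      case False
      hence h0: "\<forall>j. j \<notin> J \<longrightarrow> h$j = 0" by blast
      have "D *v h \<noteq> 0"
      proof
        assume z: "D *v h = 0"
        have DhJ: "D *v h = (\<Sum>j\<in>J. h$j *\<^sub>R d j)" by (rule MvJ[OF h0])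
        have "\<forall>i\<in>J. \<bar>\<Sum>j\<in>J. G i j * h$j\<bar> \<le> 0"
        proof
          fix i assume i: "i \<in> J"
          have "(\<Sum>j\<in>J. G i j * h$j) = d i \<bullet> (D *v h)" unfolding DhJ innsum ..
          thus "\<bar>\<Sum>j\<in>J. G i j * h$j\<bar> \<le> 0" using z by simp
        qed
        note hJ = this
        have "h$i = 0" for i
        proof (cases "i \<in> J")
          case True
          have "(1 - real (card J) * mu) * \<bar>h$i\<bar> \<le> 0" using DD_le[OF hJ True] .
          thus ?thesis using kmu1 by (simp add: mult_le_0_iff)
        next
          case False thus ?thesis using h0 by blast
        qed
        hence "h = 0" by (simp add: vec_eq_iff)
        thus False using ba unfolding h_def by simp
      qed
      hence "(norm (D *v h))\<^sup>2 > 0" by simp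
      moreover have "(\<Sum>j\<in>UNIV. T j) \<ge> 0" using Tnn by (simp add: sum_nonneg)
      ultimately show ?thesis using fdiff by linarith
    qed
  qed
  have "{a'. \<forall>b. f a' \<le> f b} = {a}"
  proof
    show "{a'. \<forall>b. f a' \<le> f b} \<subseteq> {a}"
    proof
      fix a' assume "a' \<in> {a'. \<forall>b. f a' \<le> f b}"
      hence "f a' \<le> f a" by simp
      thus "a' \<in> {a}" using key[of a'] by (cases "a' = a") auto
    qed
    show "{a} \<subseteq> {a'. \<forall>b. f a' \<le> f b}"
      using key by (auto simp: less_imp_le) (metis order_refl less_imp_le)
  qed
  thus ?thesis unfolding f_def a_def D_def .
qed

end
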